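(* Let $n\ge 2$, $\ell\ge 1$, and let $\mathcal{L}\in\mathcal{A}(n,n-2,\ell)$. The all-one vector $\mathbf{1}\in\mathbb{Z}^n$ can be covered only by a codeword of the form $\mathbf{1}-\lambda\mathbf{e}_i$ for some $1\le i\le n$ and some integer $0\le\lambda\le\ell$.
   Context: $\mathcal{S}(n,t,\ell)=\{\mathcal{E}\in\mathbb{Z}^n: 0\le\varepsilon_i\le\ell \text{ for all } i,\ w_H(\mathcal{E})\le t\}$, with $w_H$ the number of nonzero coordinates. A lattice here is the set of integer combinations of $n$ linearly independent vectors of $\mathbb{Z}^n$. $\mathcal{A}(n,t,\ell)$ is the set of lattices $\mathcal{L}\subseteq\mathbb{Z}^n$ such that the translates $X+\mathcal{S}(n,t,\ell)$, $X\in\mathcal{L}$, are pairwise disjoint; elements of $\mathcal{L}$ are codewords. A codeword $X\in\mathcal{L}$ covers $Y\in\mathbb{Z}^n$ if $Y=X+\mathcal{E}$ for some $\mathcal{E}\in\mathcal{S}(n,n-2,\ell)$. $\mathbf{e}_i$ is the $i$-th unit vector. *)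

theory Defs
  imports Complex_Main
begin

text \<open>Vectors of Z^n are modelled as functions nat => int vanishing outside {0..<n}
  (coordinates indexed 0..n-1).\<close>

definition zvec :: "nat \<Rightarrow> (nat \<Rightarrow> int) set" where
  "zvec n = {x. \<forall>i\<ge>n. x i = 0}"

definition wH :: "nat \<Rightarrow> (nat \<Rightarrow> int) \<Rightarrow> nat" where
  "wH n x = card {i. i < n \<and> x i \<noteq> 0}"

definition Sset :: "nat \<Rightarrow> nat \<Rightarrow> int \<Rightarrow> (nat \<Rightarrow> int) set" where
  "Sset n t l = {e \<in> zvec n. (\<forall>i<n. 0 \<le> e i \<and> e i \<le> l) \<and> wH n e \<le> t}"

definition is_lattice :: "nat \<Rightarrow> (nat \<Rightarrow> int) set \<Rightarrow> bool" where
  "is_lattice n L \<longleftrightarrow> (\<exists>b :: nat \<Rightarrow> nat \<Rightarrow> int.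
     (\<forall>j<n. b j \<in> zvec n) \<and>
     (\<forall>c :: nat \<Rightarrow> real. (\<forall>i<n. (\<Sum>j<n. c j * real_of_int (b j i)) = 0) \<longrightarrow> (\<forall>j<n. c j = 0)) \<and>
     L = {x. \<exists>c :: nat \<Rightarrow> int. x = (\<lambda>i. \<Sum>j<n. c j * b j i)})"

definition Aset :: "nat \<Rightarrow> nat \<Rightarrow> int \<Rightarrow> (nat \<Rightarrow> int) set set" where
  "Aset n t l = {L. is_lattice n L \<and>
     (\<forall>X\<in>L. \<forall>Y\<in>L. X \<noteq> Y \<longrightarrow> ((\<lambda>e i. X i + e i) ` Sset n t l) \<inter> ((\<lambda>e i. Y i + e i) ` Sset n t l) = {})}"

definition covers :: "nat \<Rightarrow> int \<Rightarrow> (nat \<Rightarrow> int) \<Rightarrow> (nat \<Rightarrow> int) \<Rightarrow> bool" where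
  "covers n l X Y \<longleftrightarrow> (\<exists>e\<in>Sset n (n - 2) l. Y = (\<lambda>i. X i + e i))"

definition onevec :: "nat \<Rightarrow> nat \<Rightarrow> int" where
  "onevec n = (\<lambda>i. if i < n then 1 else 0)"

definition unitvec :: "nat \<Rightarrow> nat \<Rightarrow> int" where
  "unitvec k = (\<lambda>i. if i = k then 1 else 0)"

end

theory Submission
  imports Defs
begin

theorem mainTheorem15:
  fixes n :: nat and l :: int and L :: "(nat \<Rightarrow> int) set" and X :: "nat \<Rightarrow> int"
  assumes "n \<ge> 2" and "l \<ge> 1" and "L \<in> Aset n (n - 2) l"
    and "X \<in> L" and "covers n l X (onevec n)"
  shows "\<exists>i<n. \<exists>lam::int. 0 \<le> lam \<and> lam \<le> l \<and> X = (\<lambda>j. onevec n j - lam * unitvec i j)"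
proof -
  obtain e where e: "e \<in> Sset n (n - 2) l" and eq: "onevec n = (\<lambda>i. X i + e i)"
    using assms(5) unfolding covers_def by blast
  have ez: "\<And>i. i \<ge> n \<Longrightarrow> e i = 0" and eb: "\<And>i. i < n \<Longrightarrow> 0 \<le> e i \<and> e i \<le> l"
    and ew: "wH n e \<le> n - 2"
    using e unfolding Sset_def zvec_def by auto
  have Xv: "\<And>k. X k = onevec n k - e k" using eq by (metis add_diff_cancel_right')
  define N where "N = {i. i < n \<and> e i \<noteq> 0}"
  have finN: "finite N" unfolding N_def by simp
  have wN: "wH n e = card N" unfolding wH_def N_def by simp
  obtain b where lat: "(\<forall>j<n. b j \<in> zvec n)"
     "L = {x. \<exists>c :: nat \<Rightarrow> int. x = (\<lambda>i. \<Sum>j<n. c j * b j i)}"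
    using assms(3) unfolding Aset_def is_lattice_def by blast
  have L0: "(\<lambda>_. 0) \<in> L" unfolding lat(2) by (rule CollectI, rule exI[of _ "\<lambda>_. 0"]) simp
  have disj: "\<And>Y. Y \<in> L \<Longrightarrow> Y \<noteq> X \<Longrightarrow> ((\<lambda>e i. Y i + e i) ` Sset n (n-2) l) \<inter> ((\<lambda>e i. X i + e i) ` Sset n (n-2) l) = {}"
    using assms(3,4) unfolding Aset_def by blast
  show ?thesis
  proof (cases "card N \<le> 1")
    case True
    then consider "card N = 0" | "card N = 1" by linarith
    then show ?thesis
    proof cases
      case 1
      hence "N = {}" using finN by simp
      hence "\<And>k. e k = 0" using ez unfolding N_def by (metis (mono_tags) empty_Collect_eq not_le)
      hence "X = (\<lambda>j. onevec n j - 0 * unitvec 0 j)" using Xv by auto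
      thus ?thesis using assms(1,2) by (intro exI[of _ 0]) auto
    next
      case 2
      then obtain i where Ni: "N = {i}" by (meson card_1_singletonE)
      hence i: "i < n" "e i \<noteq> 0" unfolding N_def by auto
      have "\<And>k. k \<noteq> i \<Longrightarrow> e k = 0"
      proof -
        fix k assume "k \<noteq> i"
        show "e k = 0"
        proof (cases "k < n")
          case True thus ?thesis using Ni \<open>k \<noteq> i\<close> unfolding N_def by blast
        qed (use ez in auto)
      qed
      hence "X = (\<lambda>j. onevec n j - e i * unitvec i j)"
        using Xv unfolding unitvec_def by (auto simp: fun_eq_iff)
      thus ?thesis using i eb[OF i(1)] by blast
    qed
  next
    case False
    define a where "a = (\<lambda>k. if k < n \<and> e k = 0 then 1 else (0::int))"
    define c where "c = (\<lambda>k. if k < n \<and> e k \<noteq> 0 then e k - 1 else (0::int))"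
    have "{i. i < n \<and> a i \<noteq> 0} = {..<n} - N" unfolding a_def N_def by auto
    hence wa: "wH n a = n - card N" unfolding wH_def using N_def
      by (simp add: card_Diff_subset finN subset_eq)
    have "{i. i < n \<and> c i \<noteq> 0} \<subseteq> N" unfolding c_def N_def by auto
    hence wc: "wH n c \<le> card N" unfolding wH_def by (simp add: card_mono finN)
    have aS: "a \<in> Sset n (n-2) l"
      unfolding Sset_def zvec_def using wa False assms(2) by (auto simp: a_def)
    have cS: "c \<in> Sset n (n-2) l"
      unfolding Sset_def zvec_def using wc ew wN eb assms(2) by (auto simp: c_def) (metis order_le_less, smt (verit))
    have same: "(\<lambda>i. 0 + a i) = (\<lambda>i. X i + c i)"
      using Xv ez by (auto simp: fun_eq_iff a_def c_def onevec_def)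
    have "N \<noteq> {..<n}" using ew wN assms(1) by auto
    then obtain k where k: "k < n" "e k = 0" unfolding N_def by auto
    hence "X k = 1" using Xv by (simp add: onevec_def)
    hence "(\<lambda>_. 0) \<noteq> X" by auto
    from disj[OF L0 this] same aS cS show ?thesis by blast
  qed
qed

end
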